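(* For any integers $n\ge k\ge1$, $$w(n,k)=\sum_{j=1}^k\binom{n-j}{k-j}N(n,j)\quad\text{and}\quad N(n,k)=\sum_{j=1}^k\binom{n-j}{k-j}(-1)^{k-j}w(n,j).$$
   Context: For $n\ge k\ge1$, $N(n,k)=\frac1n\binom{n}{k}\binom{n}{k-1}$ (Narayana number) and $w(n,k)=\frac1k\binom{n-1}{k-1}\binom{n+k}{k-1}$. *)

theory Defs
  imports Main "HOL.Rat"
begin

definition narayana :: "nat \<Rightarrow> nat \<Rightarrow> rat" where
  "narayana n k = (1 / of_nat n) * of_nat (n choose k) * of_nat (n choose (k - 1))"

definition wnum :: "nat \<Rightarrow> nat \<Rightarrow> rat" where
  "wnum n k = (1 / of_nat k) * of_nat ((n - 1) choose (k - 1)) * of_nat ((n + k) choose (k - 1))"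

end

theory Submission
  imports Defs
begin

lemma vand_aux:
  assumes "k \<le> n" "1 \<le> k"
  shows "(\<Sum>j=1..k. (k choose j) * (n choose (j - 1))) = (n + k) choose (k - 1)"
proof -
  have "(\<Sum>i\<le>n+1. (k choose i) * (n choose (n + 1 - i))) = (k + n) choose (n + 1)"
    by (rule vandermonde)
  also have "\<dots> = (n + k) choose (k - 1)"
  proof (cases k)
    case 0 then show ?thesis using assms by simp
  next
    case (Suc m) then show ?thesis
      using binomial_symmetric[of "n+1" "k+n"] by (simp add: add.commute)
  qed
  also have "(\<Sum>i\<le>n+1. (k choose i) * (n choose (n + 1 - i)))
      = (\<Sum>i=1..k. (k choose i) * (n choose (n + 1 - i)))"
    by (intro sum.mono_neutral_right) (use assms in auto)
  also have "\<dots> = (\<Sum>j=1..k. (k choose j) * (n choose (j - 1)))"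
  proof (rule sum.cong)
    fix i assume i: "i \<in> {1..k}"
    then have "n choose (n + 1 - i) = n choose (i - 1)"
      using assms binomial_symmetric[of "i-1" n] by auto
    then show "(k choose i) * (n choose (n + 1 - i)) = (k choose i) * (n choose (i - 1))" by simp
  qed simp
  finally show ?thesis by simp
qed

lemma term_aux:
  assumes "1 \<le> j" "j \<le> k" "k \<le> n"
  shows "of_nat ((n - j) choose (k - j)) * narayana n j
     = (of_nat ((n-1) choose (k-1)) / of_nat k) * of_nat ((k choose j) * (n choose (j - 1)))"
proof -
  have e1: "j * (n choose j) = n * ((n-1) choose (j-1))"
    using assms by (intro times_binomial_minus1_eq) auto
  have e2: "j * (k choose j) = k * ((k-1) choose (j-1))"
    using assms by (intro times_binomial_minus1_eq) auto
  have e3: "((n-1) choose (k-1)) * ((k-1) choose (j-1)) = ((n-1) choose (j-1)) * ((n-j) choose (k-j))"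
    using assms choose_mult[of "j-1" "k-1" "n-1"] by (simp add: diff_diff_eq)
  have r1: "(of_nat (n choose j) :: rat) / of_nat n = of_nat ((n-1) choose (j-1)) / of_nat j"
  proof -
    have "(of_nat j :: rat) * of_nat (n choose j) = of_nat n * of_nat ((n-1) choose (j-1))"
      using e1 by (metis of_nat_mult)
    then show ?thesis using assms by (simp add: field_simps)
  qed
  have r2: "(of_nat (k choose j) :: rat) / of_nat k = of_nat ((k-1) choose (j-1)) / of_nat j"
  proof -
    have "(of_nat j :: rat) * of_nat (k choose j) = of_nat k * of_nat ((k-1) choose (j-1))"
      using e2 by (metis of_nat_mult)
    then show ?thesis using assms by (simp add: field_simps)
  qed
  have r3: "(of_nat ((n-1) choose (k-1)) :: rat) * of_nat ((k-1) choose (j-1)) = of_nat ((n-1) choose (j-1)) * of_nat ((n-j) choose (k-j))"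
    using e3 by (metis of_nat_mult)
  have "of_nat ((n - j) choose (k - j)) * narayana n j
     = of_nat ((n - j) choose (k - j)) * ((of_nat (n choose j) :: rat) / of_nat n) * of_nat (n choose (j-1))"
    unfolding narayana_def by simp
  also have "\<dots> = of_nat ((n - j) choose (k - j)) * of_nat ((n-1) choose (j-1)) * of_nat (n choose (j-1)) / of_nat j"
    using r1 by simp
  also have "\<dots> = of_nat ((n-1) choose (k-1)) * of_nat ((k-1) choose (j-1)) * of_nat (n choose (j-1)) / of_nat j"
    using r3 by (simp add: mult.commute)
  also have "\<dots> = of_nat ((n-1) choose (k-1)) * ((of_nat (k choose j) :: rat) / of_nat k) * of_nat (n choose (j-1))"
    using r2 by simp
  finally show ?thesis by simp
qed

lemma part1:
  assumes "1 \<le> k" "k \<le> n"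
  shows "wnum n k = (\<Sum>j=1..k. of_nat ((n - j) choose (k - j)) * narayana n j)"
proof -
  have "(\<Sum>j=1..k. of_nat ((n - j) choose (k - j)) * narayana n j)
     = (\<Sum>j=1..k. (of_nat ((n-1) choose (k-1)) / of_nat k) * of_nat ((k choose j) * (n choose (j - 1))))"
    using assms by (intro sum.cong refl term_aux) auto
  also have "\<dots> = (of_nat ((n-1) choose (k-1)) / of_nat k) * of_nat (\<Sum>j=1..k. (k choose j) * (n choose (j - 1)))"
    by (simp add: sum_distrib_left)
  also have "\<dots> = wnum n k"
    using vand_aux[OF assms(2) assms(1)] unfolding wnum_def by simp
  finally show ?thesis by simp
qed

lemma alt_aux: "(\<Sum>t\<le>m. of_nat (m choose t) * (-1::rat) ^ (m - t)) = (if m = 0 then 1 else 0)"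
  using binomial_ring[of "1::rat" "-1" m] by (simp add: power_0_left)

lemma inner_aux:
  assumes "i \<le> k"
  shows "(\<Sum>j=i..k. (-1::rat) ^ (k - j) * of_nat ((k - i) choose (j - i))) = (if i = k then 1 else 0)"
proof -
  have "(\<Sum>j=i..k. (-1::rat) ^ (k - j) * of_nat ((k - i) choose (j - i)))
      = (\<Sum>t=0..k-i. (-1::rat) ^ (k - (t + i)) * of_nat ((k - i) choose (t + i - i)))"
    using assms sum.shift_bounds_cl_nat_ivl[of "\<lambda>j. (-1::rat) ^ (k - j) * of_nat ((k - i) choose (j - i))" 0 i "k-i"]
    by simp
  also have "\<dots> = (\<Sum>t\<le>k-i. of_nat ((k-i) choose t) * (-1::rat) ^ ((k-i) - t))"
    by (intro sum.cong) (auto simp: atLeast0AtMost add.commute)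
  also have "\<dots> = (if k - i = 0 then 1 else 0)" by (rule alt_aux)
  also have "\<dots> = (if i = k then 1 else 0)" using assms by simp
  finally show ?thesis .
qed

theorem lemma4p4:
  fixes n k :: nat
  assumes "1 \<le> k" and "k \<le> n"
  shows "wnum n k = (\<Sum>j=1..k. of_nat ((n - j) choose (k - j)) * narayana n j)
     \<and> narayana n k = (\<Sum>j=1..k. of_nat ((n - j) choose (k - j)) * (-1) ^ (k - j) * wnum n j)"
proof
  show "wnum n k = (\<Sum>j=1..k. of_nat ((n - j) choose (k - j)) * narayana n j)"
    using part1 assms by blast
  define f where "f i j = (if i \<le> j then of_nat ((n - j) choose (k - j)) * (-1::rat) ^ (k - j) * (of_nat ((n - i) choose (j - i)) * narayana n i) else 0)" for i j
  have "(\<Sum>j=1..k. of_nat ((n - j) choose (k - j)) * (-1) ^ (k - j) * wnum n j)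
     = (\<Sum>j=1..k. \<Sum>i=1..k. f i j)"
  proof (rule sum.cong)
    fix j assume j: "j \<in> {1..k}"
    have "wnum n j = (\<Sum>i=1..j. of_nat ((n - i) choose (j - i)) * narayana n i)"
      using j assms by (intro part1) auto
    also have "\<dots> = (\<Sum>i=1..k. if i \<le> j then of_nat ((n - i) choose (j - i)) * narayana n i else 0)"
      using j by (intro sum.mono_neutral_cong_left) auto
    finally show "of_nat ((n - j) choose (k - j)) * (-1) ^ (k - j) * wnum n j = (\<Sum>i=1..k. f i j)"
      by (simp add: sum_distrib_left f_def if_distrib cong: if_cong)
  qed simp
  also have "\<dots> = (\<Sum>i=1..k. \<Sum>j=1..k. f i j)" by (rule sum.swap)
  also have "\<dots> = (\<Sum>i=1..k. if i = k then narayana n i else 0)"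
  proof (rule sum.cong)
    fix i assume i: "i \<in> {1..k}"
    have "(\<Sum>j=1..k. f i j) = (\<Sum>j=i..k. f i j)"
      using i by (intro sum.mono_neutral_right) (auto simp: f_def)
    also have "\<dots> = (\<Sum>j=i..k. narayana n i * of_nat ((n - i) choose (k - i)) * ((-1::rat) ^ (k - j) * of_nat ((k - i) choose (j - i))))"
    proof (rule sum.cong)
      fix j assume j: "j \<in> {i..k}"
      have "((n - i) choose (k - i)) * ((k - i) choose (j - i)) = ((n - i) choose (j - i)) * ((n - j) choose (k - j))"
      proof -
        have a: "n - i - (j - i) = n - j" "k - i - (j - i) = k - j" using j i assms by auto
        have p: "j-i \<le> k-i" "k-i \<le> n-i" using j i assms by auto
        show ?thesis using choose_mult[OF p, unfolded a] by simp
      qed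
      then have "(of_nat ((n - i) choose (k - i)) :: rat) * of_nat ((k - i) choose (j - i)) = of_nat ((n - i) choose (j - i)) * of_nat ((n - j) choose (k - j))"
        by (metis of_nat_mult)
      then show "f i j = narayana n i * of_nat ((n - i) choose (k - i)) * ((-1::rat) ^ (k - j) * of_nat ((k - i) choose (j - i)))"
        using j by (simp add: f_def algebra_simps)
    qed simp
    also have "\<dots> = narayana n i * of_nat ((n - i) choose (k - i)) * (\<Sum>j=i..k. (-1::rat) ^ (k - j) * of_nat ((k - i) choose (j - i)))"
      by (simp add: sum_distrib_left)
    also have "\<dots> = (if i = k then narayana n i else 0)"
      using inner_aux[of i k] i by simp
    finally show "(\<Sum>j=1..k. f i j) = (if i = k then narayana n i else 0)" .
  qed simp
  also have "\<dots> = narayana n k" using assms by simp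
  finally show "narayana n k = (\<Sum>j=1..k. of_nat ((n - j) choose (k - j)) * (-1) ^ (k - j) * wnum n j)" by simp
qed

end
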